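(* Let $D \subset \mathbb{N} = \{1, 2, 3, \ldots\}$ be a finite set. Then for every non-zero complex polynomial of the form $f(z) = \sum_{d \in D} c_d z^d$ (with $c_d \in \mathbb{C}$) we have \[ \alpha(D) \leq \min(\rho_+(f), \rho_-(f)), \] that is, $\alpha(D) \leq \rho(D)$.
   Context: For $n \geq 1$, the circulant graph $G_n$ with set of distances $D$ has vertex set $\{0, \ldots, n-1\}$, and vertices $u, v$ (possibly equal) are adjacent iff there is $d \in D$ with $u - v \equiv d \pmod n$ or $v - u \equiv d \pmod n$ (so loops may occur when $n \leq \max D$). $\alpha(G)$ denotes the maximum size of an independent set, where an independent set contains no two adjacent vertices and no vertex carrying a loop. $\alpha(D) := \lim_{n\to\infty} \alpha(G_n)/n$ (this limit exists and equals $\sup_n \alpha(G_n)/n$). For such a polynomial $f$, $\rho_+(f)$ (resp. $\rho_-(f)$) is the normalized Lebesgue measure (total measure $1$) of the set of $z$ on the unit circle $|z|=1$ with $\operatorname{Re} f(z) > 0$ (resp. $\operatorname{Re} f(z) < 0$). $\rho(D)$ denotes the minimum of $\min(\rho_+(f), \rho_-(f))$ over all non-zero polynomials $f$ of this form. *)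

theory Defs
  imports "HOL-Analysis.Analysis"
begin

definition circ_adj :: "nat set \<Rightarrow> nat \<Rightarrow> nat \<Rightarrow> nat \<Rightarrow> bool" where
  "circ_adj D n u v \<longleftrightarrow>
     (\<exists>d\<in>D. (int u - int v) mod int n = int d mod int n \<or>
             (int v - int u) mod int n = int d mod int n)"

text \<open>Independent sets: no two (possibly equal) vertices adjacent, so no looped vertex.\<close>
definition circ_indep :: "nat set \<Rightarrow> nat \<Rightarrow> nat set \<Rightarrow> bool" where
  "circ_indep D n S \<longleftrightarrow> S \<subseteq> {..<n} \<and> (\<forall>u\<in>S. \<forall>v\<in>S. \<not> circ_adj D n u v)"

definition circ_alpha :: "nat set \<Rightarrow> nat \<Rightarrow> nat" where
  "circ_alpha D n = Max (card ` {S. circ_indep D n S})"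

definition alpha_D :: "nat set \<Rightarrow> real" where
  "alpha_D D = lim (\<lambda>n. real (circ_alpha D n) / real n)"

definition dpoly :: "nat set \<Rightarrow> (nat \<Rightarrow> complex) \<Rightarrow> complex \<Rightarrow> complex" where
  "dpoly D c z = (\<Sum>d\<in>D. c d * z ^ d)"

text \<open>Normalized Lebesgue measure on the unit circle, parametrized by z = cis(2 pi t), t in [0,1].\<close>
definition rho_plus :: "nat set \<Rightarrow> (nat \<Rightarrow> complex) \<Rightarrow> real" where
  "rho_plus D c = measure lborel {t \<in> {0..1::real}. Re (dpoly D c (cis (2 * pi * t))) > 0}"

definition rho_minus :: "nat set \<Rightarrow> (nat \<Rightarrow> complex) \<Rightarrow> real" where
  "rho_minus D c = measure lborel {t \<in> {0..1::real}. Re (dpoly D c (cis (2 * pi * t))) < 0}"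

end

theory Submission
  imports Defs "HOL-Library.Real_Mod" "HOL-Computational_Algebra.Polynomial"
begin

lemma geo_cis:
  fixes n :: nat and k :: int
  assumes "n > 0"
  shows "(\<Sum>j<n. cis (2*pi * (real j * of_int k / real n))) = (if int n dvd k then of_nat n else 0)"
proof -
  define w where "w = cis (2*pi *  of_int k / real n)"
  have pw: "cis (2*pi * (real j * of_int k / real n)) = w ^ j" for j
  proof -
    have "w ^ j = cis (real j * (2*pi * of_int k / real n))" by (simp add: w_def Complex.DeMoivre)
    then show ?thesis by (simp add: field_simps)
  qed
  show ?thesis
  proof (cases "int n dvd k")
    case True
    then obtain m where m: "k = int n * m" by (auto elim: dvdE)
    have "cis (2*pi * (real j * of_int k / real n)) = 1" for j
    proof -
      have "2*pi * (real j * of_int k / real n) = 2*pi *  of_int (int j * m)"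
        using assms by (simp add: m field_simps)
      then show ?thesis by simp
    qed
    then show ?thesis using True by simp
  next
    case False
    have "w \<noteq> 1"
    proof
      assume "w = 1"
      then obtain m where "2*pi *  of_int k / real n = of_int m * (2*pi)"
        unfolding w_def cis_eq_1_iff by blast
      then have "of_int k = real_of_int m * real n" using assms by (simp add: field_simps)
      then have "k = m * int n" by (metis of_int_eq_iff of_int_mult of_int_of_nat_eq)
      then show False using False by simp
    qed
    moreover have "w ^ n = 1"
    proof -
      have "w ^ n = cis (real n * (2*pi * of_int k / real n))" by (simp add: w_def Complex.DeMoivre)
      then have "w ^ n = cis (2*pi * of_int k)" using assms by simp
      then show ?thesis by simp
    qed
    ultimately have "(\<Sum>j<n. w ^ j) = 0" by (simp add: geometric_sum)
    then show ?thesis using False pw by simp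
  qed
qed

lemma lin_solve:
  fixes R :: "'j \<Rightarrow> 'i \<Rightarrow> complex"
  assumes "finite P" "finite S" "card P < card S"
  shows "\<exists>a. (\<exists>s\<in>S. a s \<noteq> 0) \<and> (\<forall>j\<in>P. (\<Sum>s\<in>S. R j s * a s) = 0)"
  using assms
proof (induction P arbitrary: S R rule: finite_induct)
  case empty
  then have "S \<noteq> {}" by auto
  then show ?case by (intro exI[of _ "\<lambda>_. 1"]) auto
next
  case (insert j P)
  show ?case
  proof (cases "\<forall>s\<in>S. R j s = 0")
    case True
    from insert.IH[of S R] insert.prems insert.hyps obtain a where
      "(\<exists>s\<in>S. a s \<noteq> 0) \<and> (\<forall>j\<in>P. (\<Sum>s\<in>S. R j s * a s) = 0)" by auto
    then show ?thesis using True by (intro exI[of _ a]) auto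
  next
    case False
    then obtain s0 where s0: "s0 \<in> S" "R j s0 \<noteq> 0" by auto
    define S' where "S' = S - {s0}"
    define R' where "R' = (\<lambda>i s. R i s - R i s0 * R j s / R j s0)"
    have fS': "finite S'" using insert.prems by (simp add: S'_def)
    have cS': "card P < card S'" using insert.prems insert.hyps s0 by (simp add: S'_def)
    from insert.IH[OF fS' cS', of R'] obtain a' where
      a': "\<exists>s\<in>S'. a' s \<noteq> 0" "\<forall>i\<in>P. (\<Sum>s\<in>S'. R' i s * a' s) = 0" by auto
    define a where "a = (\<lambda>s. if s = s0 then - (\<Sum>s\<in>S'. R j s * a' s) / R j s0 else a' s)"
    have key: "(\<Sum>s\<in>S. R i s * a s) = (\<Sum>s\<in>S'. R' i s * a' s)" for i
    proof -
      have "(\<Sum>s\<in>S. R i s * a s) = R i s0 * a s0 + (\<Sum>s\<in>S'. R i s * a s)"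
        using s0 insert.prems by (simp add: S'_def sum.remove)
      also have "(\<Sum>s\<in>S'. R i s * a s) = (\<Sum>s\<in>S'. R i s * a' s)"
        by (rule sum.cong) (auto simp: a_def S'_def)
      also have "R i s0 * a s0 = - (\<Sum>s\<in>S'. R i s0 * R j s / R j s0 * a' s)"
        by (simp add: a_def sum_distrib_left sum_divide_distrib sum_negf field_simps)
      finally show ?thesis
        by (simp add: R'_def algebra_simps sum_subtractf)
    qed
    have "R' j s = 0" for s using s0 by (simp add: R'_def)
    then have "(\<Sum>s\<in>S. R j s * a s) = 0" using key[of j] by simp
    moreover have "\<forall>i\<in>P. (\<Sum>s\<in>S. R i s * a s) = 0" using key a'(2) by simp
    moreover have "\<exists>s\<in>S. a s \<noteq> 0" using a'(1) by (auto simp: a_def S'_def)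
    ultimately show ?thesis by (intro exI[of _ a]) auto
  qed
qed

lemma triple_prod:
  fixes f g h :: "_ \<Rightarrow> 'a::comm_ring"
  shows "(sum f A) * (sum g B) * (sum h C) = (\<Sum>a\<in>A. \<Sum>b\<in>B. \<Sum>c\<in>C. f a * g b * h c)"
proof -
  have "sum f A * sum g B * sum h C = (\<Sum>a\<in>A. \<Sum>b\<in>B. f a * g b) * sum h C" by (simp add: sum_product)
  also have "\<dots> = (\<Sum>a\<in>A. \<Sum>b\<in>B. f a * g b * sum h C)" by (simp add: sum_distrib_right)
  also have "\<dots> = (\<Sum>a\<in>A. \<Sum>b\<in>B. \<Sum>c\<in>C. f a * g b * h c)" by (simp add: sum_distrib_left)
  finally show ?thesis .
qed

lemma small_dvd:
  assumes "s < n" "s0 < (n::nat)"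
  shows "int n dvd (int s - int s0) \<longleftrightarrow> s = s0"
proof
  assume "int n dvd (int s - int s0)"
  then obtain k where k: "int s - int s0 = int n * k" by (auto elim: dvdE)
  show "s = s0"
  proof (cases "k = 0")
    case True then show ?thesis using k by simp
  next
    case False
    then have "k \<ge> 1 \<or> k \<le> -1" by linarith
    then show ?thesis
    proof
      assume "k \<ge> 1"
      then have "int n * k \<ge> int n" by (simp add: mult_le_cancel_left1)
      then show ?thesis using k assms by linarith
    next
      assume "k \<le> -1"
      then have "int n * k \<le> - int n" by (metis mult.commute mult_minus1 mult_right_mono of_nat_0_le_iff)
      then show ?thesis using k assms by linarith
    qed
  qed
qed simp

lemma indep_ndvd:
  assumes "circ_indep D n S" "s \<in> S" "s' \<in> S" "d \<in> D"
  shows "\<not> int n dvd (int s - int s' + int d)"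
proof
  assume h: "int n dvd (int s - int s' + int d)"
  have "int n dvd ((int s' - int s) - int d)"
    using h by (metis dvd_minus_iff minus_diff_eq diff_diff_eq2 add.commute diff_add_eq)
  then have "(int s' - int s) mod int n = int d mod int n" by (simp add: mod_eq_dvd_iff)
  then have "circ_adj D n s' s" using assms(4) unfolding circ_adj_def by blast
  then show False using assms unfolding circ_indep_def by blast
qed

lemma discrete:
  fixes b :: "nat \<Rightarrow> complex"
  assumes n: "n > 0" and ind: "circ_indep D n S"
    and G_def: "\<And>j. G j = (\<Sum>d\<in>D. b d * cis (2*pi*(real j * real d / real n)))"
    and nz: "\<forall>j<n. Re (G j) \<noteq> 0"
  shows "card S \<le> card {j\<in>{..<n}. Re (G j) > 0}"
proof (rule ccontr)
  define P where "P = {j\<in>{..<n}. Re (G j) > 0}"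
  assume "\<not> card S \<le> card {j\<in>{..<n}. Re (G j) > 0}"
  then have cP: "card P < card S" by (simp add: P_def)
  have Ssub: "S \<subseteq> {..<n}" using ind by (simp add: circ_indep_def)
  then have fS: "finite S" by (rule finite_subset) simp
  have fP: "finite P" by (simp add: P_def)
  define R where "R = (\<lambda>j s. cis (2*pi*(real j * real s / real n)))"
  from lin_solve[OF fP fS cP, of R] obtain a where
    a: "\<exists>s\<in>S. a s \<noteq> 0" "\<forall>j\<in>P. (\<Sum>s\<in>S. R j s * a s) = 0" by auto
  define F where "F = (\<lambda>j. \<Sum>s\<in>S. R j s * a s)"
  define psi where "psi = (\<lambda>j. (cmod (F j))\<^sup>2)"
  have FP: "F j = 0" if "j \<in> P" for j using a(2) that by (simp add: F_def)
  obtain j0 where j0: "j0 < n" "F j0 \<noteq> 0"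
  proof -
    obtain s0 where s0: "s0 \<in> S" "a s0 \<noteq> 0" using a(1) by auto
    have "(\<Sum>j<n. F j * cis (- (2*pi*(real j * real s0 / real n))))
        = (\<Sum>s\<in>S. a s * (\<Sum>j<n. cis (2*pi*(real j * of_int (int s - int s0) / real n))))"
    proof -
      have "(\<Sum>j<n. F j * cis (- (2*pi*(real j * real s0 / real n))))
          = (\<Sum>j<n. \<Sum>s\<in>S. a s * cis (2*pi*(real j * of_int (int s - int s0) / real n)))"
        unfolding F_def R_def sum_distrib_right
        by (intro sum.cong refl) (simp add: cis_mult algebra_simps diff_divide_distrib)
      also have "\<dots> = (\<Sum>s\<in>S. \<Sum>j<n. a s * cis (2*pi*(real j * of_int (int s - int s0) / real n)))"
        by (rule sum.swap)
      finally show ?thesis by (simp add: sum_distrib_left)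
    qed
    also have "\<dots> = (\<Sum>s\<in>S. a s * (if s = s0 then of_nat n else 0))"
    proof (intro sum.cong refl)
      fix s assume "s \<in> S"
      then have "s < n" "s0 < n" using Ssub s0 by auto
      then have "int n dvd (int s - int s0) \<longleftrightarrow> s = s0"
        by (rule small_dvd)
      moreover have "(\<Sum>j<n. cis (2*pi*(real j * of_int (int s - int s0) / real n)))
          = (if int n dvd (int s - int s0) then of_nat n else 0)" by (rule geo_cis[OF n])
      ultimately show "a s * (\<Sum>j<n. cis (2*pi*(real j * of_int (int s - int s0) / real n)))
          = a s * (if s = s0 then of_nat n else 0)" by (simp only:)
    qed
    also have "\<dots> = (\<Sum>s\<in>S. if s = s0 then a s * of_nat n else 0)" by (rule sum.cong) auto
    also have "\<dots> = a s0 * of_nat n" using s0 fS by (simp add: sum.delta)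
    finally have "(\<Sum>j<n. F j * cis (- (2*pi*(real j * real s0 / real n)))) \<noteq> 0"
      using s0 n by simp
    then obtain j where "j < n" "F j \<noteq> 0" by (metis (no_types, lifting) lessThan_iff mult_eq_0_iff sum.neutral)
    then show ?thesis using that by blast
  qed
  have j0P: "j0 \<notin> P" using j0 FP by blast
  have neg: "Re (G j) < 0" if "j < n" "j \<notin> P" for j
    using nz that by (force simp: P_def)
  have psi_nn: "psi j \<ge> 0" for j by (simp add: psi_def)
  have psi0: "psi j0 > 0" using j0 by (simp add: psi_def)
  have ortho: "(\<Sum>j<n. of_real (psi j) * G j) = 0"
  proof -
    have "of_real (psi j) * G j = (\<Sum>s\<in>S. \<Sum>s'\<in>S. \<Sum>d\<in>D. (a s * cnj (a s') * b d) *
            cis (2*pi*(real j * of_int (int s - int s' + int d) / real n)))" for j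
    proof -
      have "of_real (psi j) * G j = F j * cnj (F j) * G j"
        unfolding psi_def complex_norm_square by simp
      also have "\<dots> = (\<Sum>s\<in>S. \<Sum>s'\<in>S. \<Sum>d\<in>D. (R j s * a s) * (cnj (R j s') * cnj (a s')) *
            (b d * cis (2*pi*(real j * real d / real n))))"
        unfolding F_def G_def cnj_sum triple_prod complex_cnj_mult by simp
      also have "\<dots> = (\<Sum>s\<in>S. \<Sum>s'\<in>S. \<Sum>d\<in>D. (a s * cnj (a s') * b d) *
            cis (2*pi*(real j * of_int (int s - int s' + int d) / real n)))"
      proof (intro sum.cong refl)
        fix s s' d
        have "R j s * cnj (R j s') * cis (2*pi*(real j * real d / real n))
            = cis (2*pi*(real j * of_int (int s - int s' + int d) / real n))"
          unfolding R_def cis_cnj cis_mult by (simp add: algebra_simps add_divide_distrib diff_divide_distrib)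
        then show "(R j s * a s) * (cnj (R j s') * cnj (a s')) * (b d * cis (2*pi*(real j * real d / real n)))
          = (a s * cnj (a s') * b d) * cis (2*pi*(real j * of_int (int s - int s' + int d) / real n))"
          by (simp add: algebra_simps)
      qed
      finally show ?thesis .
    qed
    then have "(\<Sum>j<n. of_real (psi j) * G j) = (\<Sum>j<n. \<Sum>s\<in>S. \<Sum>s'\<in>S. \<Sum>d\<in>D. (a s * cnj (a s') * b d) *
            cis (2*pi*(real j * of_int (int s - int s' + int d) / real n)))" by simp
    also have "\<dots> = (\<Sum>s\<in>S. \<Sum>s'\<in>S. \<Sum>d\<in>D. \<Sum>j<n. (a s * cnj (a s') * b d) *
            cis (2*pi*(real j * of_int (int s - int s' + int d) / real n)))"
    proof -
      have "(\<Sum>j<n. \<Sum>s\<in>S. \<Sum>s'\<in>S. \<Sum>d\<in>D. (a s * cnj (a s') * b d) * cis (2*pi*(real j * of_int (int s - int s' + int d) / real n)))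
          = (\<Sum>s\<in>S. \<Sum>j<n. \<Sum>s'\<in>S. \<Sum>d\<in>D. (a s * cnj (a s') * b d) * cis (2*pi*(real j * of_int (int s - int s' + int d) / real n)))" by (rule sum.swap)
      also have "\<dots> = (\<Sum>s\<in>S. \<Sum>s'\<in>S. \<Sum>j<n. \<Sum>d\<in>D. (a s * cnj (a s') * b d) * cis (2*pi*(real j * of_int (int s - int s' + int d) / real n)))"
        by (rule sum.cong[OF refl], rule sum.swap)
      also have "\<dots> = (\<Sum>s\<in>S. \<Sum>s'\<in>S. \<Sum>d\<in>D. \<Sum>j<n. (a s * cnj (a s') * b d) * cis (2*pi*(real j * of_int (int s - int s' + int d) / real n)))"
        by (rule sum.cong[OF refl], rule sum.cong[OF refl], rule sum.swap)
      finally show ?thesis .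
    qed
    also have "\<dots> = 0"
    proof -
      have "(\<Sum>j<n. (a s * cnj (a s') * b d) *
            cis (2*pi*(real j * of_int (int s - int s' + int d) / real n))) = 0"
        if "s \<in> S" "s' \<in> S" "d \<in> D" for s s' d
      proof -
        have "\<not> int n dvd (int s - int s' + int d)" using indep_ndvd[OF ind] that by blast
        moreover have "(\<Sum>j<n. cis (2*pi*(real j * of_int (int s - int s' + int d) / real n)))
          = (if int n dvd (int s - int s' + int d) then of_nat n else 0)" by (rule geo_cis[OF n])
        ultimately show ?thesis by (simp only: sum_distrib_left[symmetric]) simp
      qed
      then show ?thesis by simp
    qed
    finally show ?thesis .
  qed
  then have "Re (\<Sum>j<n. of_real (psi j) * G j) = 0" by simp
  then have "(\<Sum>j<n. psi j * Re (G j)) = 0" by (simp add: Re_sum)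
  moreover have "(\<Sum>j<n. psi j * Re (G j)) < 0"
  proof -
    have "(\<Sum>j<n. psi j * Re (G j)) = psi j0 * Re (G j0) + (\<Sum>j\<in>{..<n}-{j0}. psi j * Re (G j))"
      using j0 by (simp add: sum.remove)
    moreover have "(\<Sum>j\<in>{..<n}-{j0}. psi j * Re (G j)) \<le> 0"
    proof (rule sum_nonpos)
      fix j assume "j \<in> {..<n} - {j0}"
      then show "psi j * Re (G j) \<le> 0"
        using FP neg[of j] psi_nn[of j] by (cases "j \<in> P") (auto simp: psi_def mult_nonneg_nonpos)
    qed
    moreover have "psi j0 * Re (G j0) < 0" using psi0 neg[OF j0(1) j0P] by (simp add: mult_pos_neg)
    ultimately show ?thesis by linarith
  qed
  ultimately show False by simp
qed

lemma cis_level_countable: "countable {t::real. cis (2*pi*t) = r}"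
proof (cases "{t::real. cis (2*pi*t) = r} = {}")
  case True then show ?thesis by simp
next
  case False
  then obtain t0 where t0: "cis (2*pi*t0) = r" by auto
  have "{t::real. cis (2*pi*t) = r} \<subseteq> range (\<lambda>m::int. t0 + of_int m)"
  proof
    fix t assume "t \<in> {t::real. cis (2*pi*t) = r}"
    then have "cis (2*pi*t) = cis (2*pi*t0)" using t0 by simp
    then have "cis (2*pi*t) * cis (- (2*pi*t0)) = cis (2*pi*t0) * cis (- (2*pi*t0))" by simp
    then have "cis (2*pi*(t - t0)) = 1" by (simp add: cis_mult algebra_simps)
    then obtain m where "2*pi*(t - t0) = of_int m * (2*pi)" unfolding cis_eq_1_iff by blast
    then have "(t - t0 - of_int m) * (2*pi) = 0" by (simp add: algebra_simps)
    then have "t = t0 + of_int m" using pi_gt_zero by simp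
    then show "t \<in> range (\<lambda>m::int. t0 + of_int m)" by blast
  qed
  then show ?thesis by (rule countable_subset) simp
qed

lemma zeros_countable:
  assumes fD: "finite D" and D0: "0 \<notin> D" and cd: "\<exists>d\<in>D. c d \<noteq> 0"
  shows "countable {t::real. Re (dpoly D c (cis (2*pi*t))) = 0}"
proof -
  obtain d0 where d0: "d0 \<in> D" "c d0 \<noteq> 0" using cd by auto
  define M where "M = Max D"
  have dM: "d \<le> M" if "d \<in> D" for d using fD that by (simp add: M_def)
  define q where "q = (\<Sum>d\<in>D. monom (c d) (M + d) + monom (cnj (c d)) (M - d))"
  have "coeff q (M + d0) = (\<Sum>d\<in>D. (if d = d0 then c d else 0))"
    unfolding q_def coeff_sum
  proof (intro sum.cong refl)
    fix d assume "d \<in> D"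
    then have "M - d \<noteq> M + d0" using d0 D0 by (metis add_cancel_right_right diff_le_self le_add1 le_antisym neq0_conv)
    then show "coeff (monom (c d) (M + d) + monom (cnj (c d)) (M - d)) (M + d0) = (if d = d0 then c d else 0)"
      by auto
  qed
  also have "\<dots> = c d0" using fD d0 by (simp add: sum.delta')
  finally have "q \<noteq> 0" using d0 by auto
  then have fin: "finite {z. poly q z = 0}" by (rule poly_roots_finite)
  have sub: "{t::real. Re (dpoly D c (cis (2*pi*t))) = 0} \<subseteq> (\<Union>r\<in>{z. poly q z = 0}. {t. cis (2*pi*t) = r})"
  proof
    fix t assume "t \<in> {t::real. Re (dpoly D c (cis (2*pi*t))) = 0}"
    then have re0: "Re (dpoly D c (cis (2*pi*t))) = 0" by simp
    define z where "z = cis (2*pi*t)"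
    have zc: "z * cnj z = 1" by (simp add: z_def cis_cnj cis_mult)
    have pw: "z ^ M * cnj z ^ d = z ^ (M - d)" if "d \<in> D" for d
    proof -
      have "z ^ M = z ^ (M - d) * z ^ d" using dM[OF that] by (simp add: power_add[symmetric])
      then have "z ^ M * cnj z ^ d = z ^ (M - d) * (z * cnj z) ^ d" by (simp add: power_mult_distrib)
      then show ?thesis using zc by simp
    qed
    have "poly q z = (\<Sum>d\<in>D. c d * z ^ (M + d) + cnj (c d) * z ^ (M - d))"
      by (simp add: q_def poly_sum poly_monom)
    also have "\<dots> = (\<Sum>d\<in>D. z ^ M * (c d * z ^ d) + z ^ M * (cnj (c d) * cnj z ^ d))"
      by (intro sum.cong refl) (simp add: pw[symmetric] power_add algebra_simps)
    also have "\<dots> = z ^ M * (dpoly D c z + cnj (dpoly D c z))"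
      by (simp add: dpoly_def sum.distrib sum_distrib_left cnj_sum distrib_left)
    also have "\<dots> = 0" using re0 by (simp add: complex_add_cnj z_def)
    finally show "t \<in> (\<Union>r\<in>{z. poly q z = 0}. {t. cis (2*pi*t) = r})" by (auto simp: z_def)
  qed
  show ?thesis
    by (rule countable_subset[OF sub]) (intro countable_UN countable_finite[OF fin] cis_level_countable)
qed

lemma h_meas: "(\<lambda>t. Re (dpoly D c (cis (2*pi*t)))) \<in> borel_measurable borel"
proof -
  have "continuous_on UNIV (\<lambda>t. Re (dpoly D c (cis (2*pi*t))))"
    unfolding dpoly_def by (intro continuous_intros)
  then show ?thesis by (rule borel_measurable_continuous_onI)
qed

lemma measure_bound:
  assumes fD: "finite D" and D0: "0 \<notin> D" and cd: "\<exists>d\<in>D. c d \<noteq> 0"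
    and n: "n > 0" and ind: "circ_indep D n S"
  shows "real (card S) / real n \<le> rho_plus D c"
proof -
  define h where "h = (\<lambda>t. Re (dpoly D c (cis (2*pi*t))))"
  have hm[measurable]: "h \<in> borel_measurable borel" unfolding h_def by (rule h_meas)
  define H where "H = {t. h t > 0}"
  have Hs[measurable]: "H \<in> sets borel" unfolding H_def by measurable
  define A where "A = {t\<in>{0..1::real}. h t > 0}"
  have As: "A \<in> sets lborel" unfolding A_def by measurable
  define X where "X = (\<lambda>j::nat. {real j / real n ..< real (Suc j) / real n} \<inter> H)"
  have Xs[measurable]: "X j \<in> sets borel" for j unfolding X_def by measurable
  have XA: "(\<Union>j<n. X j) \<subseteq> A"
  proof
    fix t assume "t \<in> (\<Union>j<n. X j)"
    then obtain j where j: "j < n" "t \<in> X j" by auto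
    then have "real j / real n \<le> t" "t < real (Suc j) / real n" "h t > 0" by (auto simp: X_def H_def)
    moreover have "real (Suc j) / real n \<le> 1" using j n by (simp add: field_simps)
    moreover have "0 \<le> real j / real n" by simp
    ultimately have "0 \<le> t" "t \<le> 1" "h t > 0" by linarith+
    then show "t \<in> A" by (auto simp: A_def)
  qed
  have disj: "disjoint_family_on X {..<n}"
  unfolding disjoint_family_on_def proof (intro ballI impI)
    fix i j assume "i \<in> {..<n}" "j \<in> {..<n}" "i \<noteq> j"
    show "X i \<inter> X j = {}"
    proof (rule ccontr)
      assume "X i \<inter> X j \<noteq> {}"
      then obtain t where "t \<in> X i" "t \<in> X j" by blast
      then have "real i \<le> t * n" "t * n < real i + 1" "real j \<le> t * n" "t * n < real j + 1"
        using n by (auto simp: X_def field_simps)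
      then have "real i < real j + 1" "real j < real i + 1" by linarith+
      then have "i = j" by linarith
      then show False using \<open>i \<noteq> j\<close> by simp
    qed
  qed
  have "(\<Sum>j<n. emeasure lborel (X j)) = emeasure lborel (\<Union>j<n. X j)"
    by (rule sum_emeasure) (auto simp: disj)
  also have "\<dots> \<le> emeasure lborel A" by (rule emeasure_mono[OF XA As])
  finally have step1: "(\<Sum>j<n. emeasure lborel (X j)) \<le> emeasure lborel A" .
  have step2: "emeasure lborel (X j) = (\<integral>\<^sup>+ y. indicator (X j) (real j / real n + y) \<partial>lborel)" for j
  proof -
    have "emeasure lborel (X j) = (\<integral>\<^sup>+ y. indicator (X j) y \<partial>lborel)" by simp
    also have "\<dots> = (\<integral>\<^sup>+ y. indicator (X j) (real j / real n + y) \<partial>lborel)"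
      using nn_integral_real_affine[of "indicator (X j)" 1 "real j / real n"] by simp
    finally show ?thesis .
  qed
  have step3: "(\<Sum>j<n. emeasure lborel (X j)) = (\<integral>\<^sup>+ y. (\<Sum>j<n. indicator (X j) (real j / real n + y)) \<partial>lborel)"
    unfolding step2 by (rule nn_integral_sum[symmetric]) measurable
  define Z where "Z = {t::real. h t = 0}"
  have Zc: "countable Z" unfolding Z_def h_def by (rule zeros_countable[OF fD D0 cd])
  define N where "N = (\<Union>j<n. (\<lambda>t. t - real j / real n) ` Z)"
  have Nc: "countable N" unfolding N_def using Zc by auto
  have AEpt: "AE y in lborel. of_nat (card S) * indicator {0..<1 / real n} y
      \<le> (\<Sum>j<n. indicator (X j) (real j / real n + y) :: ennreal)"
  proof (rule AE_I'[OF countable_imp_null_set_lborel[OF Nc]])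
    show "{y \<in> space lborel. \<not> (of_nat (card S) * indicator {0..<1 / real n} y
      \<le> (\<Sum>j<n. indicator (X j) (real j / real n + y) :: ennreal))} \<subseteq> N"
    proof (safe)
      fix y assume y: "\<not> (of_nat (card S) * indicator {0..<1 / real n} y
        \<le> (\<Sum>j<n. indicator (X j) (real j / real n + y) :: ennreal))"
      show "y \<in> N"
      proof (rule ccontr)
        assume yN: "y \<notin> N"
        have hnz: "h (real j / real n + y) \<noteq> 0" if "j < n" for j
        proof
          assume "h (real j / real n + y) = 0"
          then have "real j / real n + y \<in> Z" by (simp add: Z_def)
          then have "y \<in> N" unfolding N_def using that
            by (auto intro!: bexI[of _ j] image_eqI[of _ _ "real j / real n + y"])
          then show False using yN by simp
        qed
        show False
        proof (cases "y \<in> {0..<1 / real n}")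
          case False then show ?thesis using y by simp
        next
          case True
          then have yb: "0 \<le> y" "y * n < 1" using n by (auto simp: field_simps)
          have ind_eq: "indicator (X j) (real j / real n + y) = (indicator H (real j / real n + y) :: ennreal)"
            if "j < n" for j
          proof -
            have "real j / real n + y \<in> {real j / real n ..< real (Suc j) / real n}"
              using yb n by (auto simp: field_simps)
            then show ?thesis by (auto simp: X_def indicator_def)
          qed
          define G where "G = (\<lambda>j::nat. dpoly D c (cis (2*pi*(real j / real n + y))))"
          have Gform: "G j = (\<Sum>d\<in>D. (c d * cis (2*pi*(real d * y))) * cis (2*pi*(real j * real d / real n)))" for j
            unfolding G_def dpoly_def
          proof (intro sum.cong refl)
            fix d
            have "cis (2*pi*(real j / real n + y)) ^ d = cis (real d * (2*pi*(real j / real n + y)))"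
              by (rule Complex.DeMoivre)
            also have "\<dots> = cis (2*pi*(real d * y)) * cis (2*pi*(real j * real d / real n))"
              by (simp add: cis_mult algebra_simps add_divide_distrib)
            finally show "c d * cis (2*pi*(real j / real n + y)) ^ d =
              (c d * cis (2*pi*(real d * y))) * cis (2*pi*(real j * real d / real n))" by simp
          qed
          have "card S \<le> card {j\<in>{..<n}. Re (G j) > 0}"
            by (rule discrete[OF n ind Gform]) (use hnz in \<open>auto simp: G_def h_def\<close>)
          moreover have "(\<Sum>j<n. indicator (X j) (real j / real n + y) :: ennreal)
              = of_nat (card {j\<in>{..<n}. Re (G j) > 0})"
          proof -
            have "(\<Sum>j<n. indicator (X j) (real j / real n + y) :: ennreal)
              = (\<Sum>j<n. if Re (G j) > 0 then 1 else 0)"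
            proof (intro sum.cong refl)
              fix j assume "j \<in> {..<n}"
              then have "indicator (X j) (real j / real n + y) = (indicator H (real j / real n + y) :: ennreal)"
                using ind_eq by simp
              then show "indicator (X j) (real j / real n + y) = (if Re (G j) > 0 then 1 else (0::ennreal))"
                by (simp add: indicator_def H_def G_def h_def)
            qed
            also have "\<dots> = (\<Sum>j\<in>{j\<in>{..<n}. Re (G j) > 0}. 1)"
              by (rule sum.inter_filter[symmetric]) simp
            finally show ?thesis by simp
          qed
          ultimately show False using y True by simp
        qed
      qed
    qed
  qed
  have "ennreal (real (card S) / real n) = (\<integral>\<^sup>+ y. of_nat (card S) * indicator {0..<1 / real n} y \<partial>lborel)"
    using n by (simp add: nn_integral_cmult_indicator ennreal_of_nat_eq_real_of_nat ennreal_mult[symmetric] divide_inverse)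
  also have "\<dots> \<le> (\<integral>\<^sup>+ y. (\<Sum>j<n. indicator (X j) (real j / real n + y)) \<partial>lborel)"
    by (rule nn_integral_mono_AE[OF AEpt])
  also have "\<dots> \<le> emeasure lborel A" using step1 step3 by simp
  finally have le: "ennreal (real (card S) / real n) \<le> emeasure lborel A" .
  have "emeasure lborel A \<le> emeasure lborel {0..1::real}" by (rule emeasure_mono) (auto simp: A_def)
  then have fin: "emeasure lborel A \<noteq> top" by (auto simp: top_unique)
  have "real (card S) / real n \<le> measure lborel A"
    using le emeasure_eq_ennreal_measure[OF fin] by (simp add: ennreal_le_iff)
  then show ?thesis by (simp add: rho_plus_def A_def h_def)
qed

lemma rho_minus_eq: "rho_minus D c = rho_plus D (\<lambda>d. - c d)"
proof -
  have "dpoly D (\<lambda>d. - c d) z = - dpoly D c z" for z by (simp add: dpoly_def sum_negf)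
  then show ?thesis by (simp add: rho_minus_def rho_plus_def)
qed

lemma circ_alpha_props:
  shows "finite {S. circ_indep D n S}" "{} \<in> {S. circ_indep D n S}"
    and "\<exists>S. circ_indep D n S \<and> card S = circ_alpha D n"
    and "\<And>S. circ_indep D n S \<Longrightarrow> card S \<le> circ_alpha D n"
    and "circ_alpha D n \<le> n"
proof -
  show fin: "finite {S. circ_indep D n S}"
    by (rule finite_subset[of _ "Pow {..<n}"]) (auto simp: circ_indep_def)
  show ne: "{} \<in> {S. circ_indep D n S}" by (simp add: circ_indep_def)
  have "circ_alpha D n \<in> card ` {S. circ_indep D n S}"
    unfolding circ_alpha_def using fin ne by (intro Max_in) auto
  then show ex: "\<exists>S. circ_indep D n S \<and> card S = circ_alpha D n" by auto
  show le: "\<And>S. circ_indep D n S \<Longrightarrow> card S \<le> circ_alpha D n"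
    unfolding circ_alpha_def using fin by (intro Max_ge) auto
  from ex obtain S where "circ_indep D n S" "card S = circ_alpha D n" by auto
  then show "circ_alpha D n \<le> n"
    by (metis card_lessThan card_mono circ_indep_def finite_lessThan)
qed

lemma mod_small:
  fixes x d n B :: int
  assumes "- (n - B) < x" "x < n - B" "0 \<le> d" "d \<le> B" "B < n" "x mod n = d"
  shows "x = d"
proof -
  define q where "q = x div n"
  have x: "x = n * q + d" using assms(6) div_mult_mod_eq[of x n] unfolding q_def by (simp add: mult.commute)
  show ?thesis
  proof (cases "q = 0")
    case True then show ?thesis using x by simp
  next
    case False
    then have "q \<ge> 1 \<or> q \<le> -1" by linarith
    then show ?thesis
    proof
      assume "q \<ge> 1"
      then have "n * q \<ge> n" using assms by (simp add: mult_le_cancel_left1)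
      then show ?thesis using x assms by linarith
    next
      assume "q \<le> -1"
      moreover have "n \<ge> 0" using assms by linarith
      ultimately have "n * q \<le> n * (-1)" by (intro mult_left_mono)
      then have "n * q \<le> - n" by simp
      then show ?thesis using x assms by linarith
    qed
  qed
qed

lemma block:
  assumes m: "m > 0" and ind: "circ_indep D m S"
    and B: "\<And>d. d \<in> D \<Longrightarrow> d \<le> B" and kn: "k * m + B \<le> n"
  shows "k * card S \<le> circ_alpha D n"
proof (cases "k = 0")
  case True then show ?thesis by simp
next
  case False
  then have "k * m \<ge> 1" using m by simp
  then have Bn: "B < n" using kn by linarith
  have Sm: "S \<subseteq> {..<m}" using ind by (simp add: circ_indep_def)
  define f where "f = (\<lambda>(j, s). j * m + s)"
  define T where "T = f ` ({..<k} \<times> S)"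
  have inj: "inj_on f ({..<k} \<times> S)"
  proof (rule inj_onI, clarsimp simp: f_def)
    fix j s j' s' assume "s \<in> S" "s' \<in> S" "j * m + s = j' * m + s'"
    moreover have "s < m" "s' < m" using Sm \<open>s \<in> S\<close> \<open>s' \<in> S\<close> by auto
    moreover have "(j * m + s) div m = j" "(j' * m + s') div m = j'"
      "(j * m + s) mod m = s" "(j' * m + s') mod m = s'" using m \<open>s < m\<close> \<open>s' < m\<close> by simp_all
    ultimately show "j = j' \<and> s = s'" by metis
  qed
  have fS: "finite S" using Sm finite_subset by blast
  have cT: "card T = k * card S" unfolding T_def using card_image[OF inj] fS by (simp add: card_cartesian_product)
  have Tb: "u + B < n" if "u \<in> T" for u
  proof -
    obtain j s where "j < k" "s \<in> S" "u = j * m + s" using \<open>u \<in> T\<close> by (auto simp: T_def f_def)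
    moreover have "s < m" using Sm \<open>s \<in> S\<close> by auto
    ultimately have "u < (j + 1) * m" by simp
    moreover have "(j + 1) * m \<le> k * m" using \<open>j < k\<close> by (intro mult_right_mono) auto
    ultimately show ?thesis using kn by linarith
  qed
  have key: False if "u \<in> T" "v \<in> T" "d \<in> D" "(int u - int v) mod int n = int d mod int n" for u v d
  proof -
    have "d \<le> B" using B that(3) by simp
    then have dn: "int d mod int n = int d" using Bn by simp
    have "int u - int v = int d"
      by (rule mod_small[of "int n" "int B"]) (use Tb[OF that(1)] Tb[OF that(2)] \<open>d \<le> B\<close> Bn that(4) dn in auto)
    obtain j s where js: "s \<in> S" "u = j * m + s" using \<open>u \<in> T\<close> by (auto simp: T_def f_def)
    obtain j' s' where js': "s' \<in> S" "v = j' * m + s'" using \<open>v \<in> T\<close> by (auto simp: T_def f_def)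
    have "int s - int s' = int d + (int j' - int j) * int m"
      using \<open>int u - int v = int d\<close> js(2) js'(2) by (simp add: algebra_simps)
    then have "(int s - int s') mod int m = int d mod int m" by simp
    then have "circ_adj D m s s'" using that(3) unfolding circ_adj_def by blast
    then show False using ind js(1) js'(1) unfolding circ_indep_def by blast
  qed
  have "circ_indep D n T"
    unfolding circ_indep_def circ_adj_def
  proof (intro conjI ballI notI)
    show "T \<subseteq> {..<n}" using Tb by fastforce
  next
    fix u v assume uv: "u \<in> T" "v \<in> T"
      "\<exists>d\<in>D. (int u - int v) mod int n = int d mod int n \<or> (int v - int u) mod int n = int d mod int n"
    then show False using key by blast
  qed
  then show ?thesis using circ_alpha_props(4) cT by metis
qed

lemma conv:
  assumes fD: "finite D"
  shows "convergent (\<lambda>n. real (circ_alpha D n) / real n)"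
proof -
  define X where "X = (\<lambda>n. real (circ_alpha D n) / real n)"
  define B where "B = Max (insert 0 D)"
  have Bd: "\<And>d. d \<in> D \<Longrightarrow> d \<le> B" using fD by (simp add: B_def)
  have X01: "0 \<le> X n" "X n \<le> 1" for n
    using circ_alpha_props(5)[of D n] by (auto simp: X_def divide_le_eq_1)
  have bdd: "bdd_above (range X)" unfolding bdd_above_def using X01(2) by blast
  define \<sigma> where "\<sigma> = Sup (range X)"
  have Xle: "X n \<le> \<sigma>" for n unfolding \<sigma>_def using bdd by (intro cSup_upper) auto
  have "X \<longlonglongrightarrow> \<sigma>"
  proof (rule LIMSEQ_I)
    fix r :: real assume r: "r > 0"
    have "\<sigma> - r/2 < Sup (range X)" using r by (simp add: \<sigma>_def)
    then obtain m where m: "\<sigma> - r/2 < X m" using bdd by (auto simp: less_cSup_iff)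
    show "\<exists>no. \<forall>n\<ge>no. norm (X n - \<sigma>) < r"
    proof (cases "m = 0")
      case True
      then have "\<sigma> < r/2" using m by (simp add: X_def)
      then have "norm (X n - \<sigma>) < r" for n using Xle[of n] X01(1)[of n] r by (simp add: abs_if)
      then show ?thesis by blast
    next
      case False
      then have m0: "m > 0" by simp
      define a where "a = circ_alpha D m"
      obtain Sm where Sm: "circ_indep D m Sm" "card Sm = a" using circ_alpha_props(3)[of D m] by (auto simp: a_def)
      have am: "a \<le> m" using circ_alpha_props(5)[of D m] by (simp add: a_def)
      obtain no :: nat where no: "2 * real (B + m) / r < real no" using reals_Archimedean2 by blast
      have "\<forall>n\<ge>Suc no + B. norm (X n - \<sigma>) < r"
      proof (intro allI impI)
        fix n assume n0: "n \<ge> Suc no + B"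
        then have n: "n \<ge> Suc no" by simp
        have npos: "real n > 0" using n by simp
        have bnd: "real (B + m) / real n < r / 2"
        proof -
          have "2 * real (B + m) < r * real no" using no r by (simp add: field_simps)
          also have "\<dots> \<le> r * real n" using n r by (intro mult_left_mono) auto
          finally show ?thesis using npos by (simp add: field_simps)
        qed
        show "norm (X n - \<sigma>) < r"
        proof (cases "B \<le> n")
          case False
          then show ?thesis using n0 by simp
        next
          case True
          define k where "k = (n - B) div m"
          have km: "k * m + B \<le> n" using True by (simp add: k_def) (metis div_mult_mod_eq le_add1 add.commute le_diff_conv2 True trans_le_add1 add_le_imp_le_diff)
          have km2: "k * m + m + B \<ge> n"
          proof -
            have "n - B = k * m + (n - B) mod m" by (simp add: k_def)
            moreover have "(n - B) mod m < m" using m0 by simp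
            ultimately show ?thesis using True by linarith
          qed
          have blk: "k * a \<le> circ_alpha D n" using block[OF m0 Sm(1) Bd km] Sm(2) by simp
          have "real a * real n - real (B + m) * real m \<le> real k * real a * real m"
          proof -
            have "real n \<le> real k * real m + real (B + m)" using km2 by (simp add: of_nat_add[symmetric] of_nat_mult[symmetric] del: of_nat_add of_nat_mult)
            then have "real a * real n \<le> real a * (real k * real m + real (B + m))" by (intro mult_left_mono) auto
            moreover have "real a * real (B + m) \<le> real m * real (B + m)" using am by (intro mult_right_mono) auto
            ultimately show ?thesis by (simp add: algebra_simps)
          qed
          then have "(real a * real n - real (B + m) * real m) / (real m * real n)
              \<le> (real k * real a * real m) / (real m * real n)"
            using npos m0 by (intro divide_right_mono) auto
          moreover have "X m - real (B + m) / real n = (real a * real n - real (B + m) * real m) / (real m * real n)"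
            using npos m0 by (simp add: X_def a_def field_simps)
          moreover have "real k * real a / real n = (real k * real a * real m) / (real m * real n)"
            using npos m0 by (simp add: field_simps)
          ultimately have "X m - real (B + m) / real n \<le> real k * real a / real n" by simp
          also have "\<dots> \<le> X n" unfolding X_def using blk npos
            by (intro divide_right_mono) (simp_all add: of_nat_mult[symmetric] del: of_nat_mult)
          finally have "X m - real (B + m) / real n \<le> X n" .
          then have "\<sigma> - r < X n" using bnd m by linarith
          then show ?thesis using Xle[of n] r by (simp add: abs_if)
        qed
      qed
      then show ?thesis by blast
    qed
  qed
  then show ?thesis unfolding X_def convergent_def by blast
qed

theorem theorem2:
  fixes D :: "nat set" and c :: "nat \<Rightarrow> complex"
  assumes "finite D" and "0 \<notin> D"
    and "\<exists>d\<in>D. c d \<noteq> 0"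
  shows "alpha_D D \<le> min (rho_plus D c) (rho_minus D c)"
proof -
  define X where "X = (\<lambda>n. real (circ_alpha D n) / real n)"
  have cv: "X \<longlonglongrightarrow> lim X" using conv[OF assms(1)] unfolding X_def convergent_LIMSEQ_iff .
  have cd': "\<exists>d\<in>D. - c d \<noteq> 0" using assms(3) by simp
  have bound: "X n \<le> rho_plus D c'" if "\<exists>d\<in>D. c' d \<noteq> 0" for c' n
  proof (cases "n = 0")
    case True
    then show ?thesis by (simp add: X_def rho_plus_def)
  next
    case False
    obtain S where "circ_indep D n S" "card S = circ_alpha D n" using circ_alpha_props(3) by blast
    then show ?thesis using measure_bound[OF assms(1,2) that _ \<open>circ_indep D n S\<close>] False by (simp add: X_def)
  qed
  have "lim X \<le> rho_plus D c"
    by (rule LIMSEQ_le_const2[OF cv]) (use bound[OF assms(3)] in auto)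
  moreover have "lim X \<le> rho_minus D c"
    unfolding rho_minus_eq by (rule LIMSEQ_le_const2[OF cv]) (use bound[OF cd'] in auto)
  ultimately show ?thesis by (simp add: alpha_D_def X_def)
qed

end
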